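(* Let $t\geqslant 2$, $r\in\{2t,2t+1\}$ and $n\geqslant 2r-1$. (1) Let $2\leqslant s\leqslant r$ and $\ell=2s-1$. Let $I^{\ell}\in\mathrm{Sym}_n$ be a permutation whose non-trivial cycles are one cycle of length $\ell$ and $r-s$ cycles of length $2$, so that $w_H(I^\ell)=2r-1$. Then $$|N_3(I^{\ell})|=\begin{cases}\ell\sum_{i=1}^{s-1}\binom{r-s}{t-i}, & r=2t,\\[2pt] \ell\sum_{i=1}^{s-2}\binom{r-s}{t-i}, & r=2t+1.\end{cases}$$ (2) Let $2\leqslant s\leqslant r-2$ and $\ell=2s$. Let $I^{\ell}\in\mathrm{Sym}_n$ be a permutation whose non-trivial cycles are one cycle of length $\ell$, one cycle of length $3$ and $r-s-2$ cycles of length $2$, so that $w_H(I^\ell)=2r-1$. Then $$|N_3(I^{\ell})|=\begin{cases}2(\ell+3)\binom{r-s-2}{t-1}+\ell\sum_{i=1}^{s-2}\binom{r-s-1}{t-i-1}, & r=2t,\\[2pt] \ell\sum_{i=1}^{s-1}\binom{r-s-1}{t-i}, & r=2t+1.\end{cases}$$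
   Context: $\mathrm{Sym}_n$ is the symmetric group on $[n]$, and $w_H(\pi)=|\{i:\pi(i)\neq i\}|$. $Tc(\pi)=\{(i,\pi(i)):\pi(i)\neq i\}$. For $\pi$ with $w_H(\pi)=2r-1$, $N_3(\pi)=\{\sigma\in\mathrm{Sym}_n:|Tc(\sigma)\cap Tc(\pi)|=r-1,\ |Tc(\sigma)|=r\}$. Binomial convention: $\binom{0}{0}=1$ and $\binom{p}{q}=0$ if $p<q$, $p<0$ or $q<0$. Empty sums are $0$. *)

theory Defs
  imports "HOL-Combinatorics.Permutations" "HOL-Combinatorics.Orbits"
begin

definition Sym :: "nat \<Rightarrow> (nat \<Rightarrow> nat) set" where
  "Sym n = {p. p permutes {1..n}}"

definition wH :: "nat \<Rightarrow> (nat \<Rightarrow> nat) \<Rightarrow> nat" where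
  "wH n p = card {i \<in> {1..n}. p i \<noteq> i}"

definition Tc :: "(nat \<Rightarrow> nat) \<Rightarrow> (nat \<times> nat) set" where
  "Tc p = {(i, p i) | i. p i \<noteq> i}"

text \<open>N_3(pi) for pi with w_H(pi) = 2r-1, i.e. r = (w_H(pi)+1)/2.\<close>
definition N3 :: "nat \<Rightarrow> (nat \<Rightarrow> nat) \<Rightarrow> (nat \<Rightarrow> nat) set" where
  "N3 n p = (let r = (wH n p + 1) div 2 in
     {\<sigma> \<in> Sym n. card (Tc \<sigma> \<inter> Tc p) = r - 1 \<and> card (Tc \<sigma>) = r})"

definition nontriv_cycles :: "nat \<Rightarrow> (nat \<Rightarrow> nat) \<Rightarrow> nat set set" where
  "nontriv_cycles n p = {orbit p x | x. x \<in> {1..n} \<and> p x \<noteq> x}"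

definition ncyc :: "nat \<Rightarrow> (nat \<Rightarrow> nat) \<Rightarrow> nat \<Rightarrow> nat" where
  "ncyc n p k = card {c \<in> nontriv_cycles n p. card c = k}"

definition binomz :: "int \<Rightarrow> int \<Rightarrow> int" where
  "binomz p q = (if q < 0 \<or> p < 0 \<or> p < q then 0 else int (nat p choose nat q))"

end

theory Submission
  imports Defs
begin


definition ADM :: "(nat\<Rightarrow>nat) \<Rightarrow> nat set \<Rightarrow> nat \<Rightarrow> nat set set" where
 "ADM p S R = {D. D \<subseteq> S \<and> card D = R \<and> (\<exists>j a. p`D - D = {j} \<and> D - p`D = {a} \<and> p j \<noteq> a)}"

definition agr :: "(nat\<Rightarrow>nat) \<Rightarrow> (nat\<Rightarrow>nat) \<Rightarrow> nat set" where
 "agr p \<sigma> = {i. \<sigma> i \<noteq> i \<and> \<sigma> i = p i}"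

definition mk :: "(nat\<Rightarrow>nat) \<Rightarrow> nat set \<Rightarrow> (nat\<Rightarrow>nat)" where
 "mk p D = (\<lambda>x. if x \<in> D then p x else if x = the_elem (p`D - D) then the_elem (D - p`D) else x)"

lemma card_Tc: "finite {i. \<sigma> i \<noteq> i} \<Longrightarrow> card (Tc \<sigma>) = card {i. \<sigma> i \<noteq> i}"
proof -
  have "Tc \<sigma> = (\<lambda>i. (i, \<sigma> i)) ` {i. \<sigma> i \<noteq> i}" unfolding Tc_def by auto
  moreover have "inj_on (\<lambda>i. (i, \<sigma> i)) X" for X by (auto simp: inj_on_def)
  ultimately show ?thesis by (simp add: card_image)
qed

lemma card_Tc_int: "card (Tc \<sigma> \<inter> Tc p) = card (agr p \<sigma>)"
proof -
  have "Tc \<sigma> \<inter> Tc p = (\<lambda>i. (i, \<sigma> i)) ` agr p \<sigma>" unfolding Tc_def agr_def by auto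
  moreover have "inj_on (\<lambda>i. (i, \<sigma> i)) X" for X by (auto simp: inj_on_def)
  ultimately show ?thesis by (simp add: card_image)
qed

lemma fin_moved: assumes "(\<sigma>::nat\<Rightarrow>nat) permutes {1..n}" shows "finite {i. \<sigma> i \<noteq> i}"
proof -
  have "{i. \<sigma> i \<noteq> i} \<subseteq> {1..n}"
  proof
    fix i assume "i \<in> {i. \<sigma> i \<noteq> i}"
    then show "i \<in> {1..n}" using permutes_not_in[OF assms, of i] by auto
  qed
  then show ?thesis by (rule finite_subset) simp
qed

lemma A1:
  assumes sp: "\<sigma> permutes {1..n}" and pp: "p permutes {1..n}"
    and cM: "card {i. \<sigma> i \<noteq> i} = r" and cD: "card (agr p \<sigma>) = r - 1" and r1: "r \<ge> 1"
  shows "agr p \<sigma> \<in> ADM p {i\<in>{1..n}. p i \<noteq> i} (r - 1) \<and> mk p (agr p \<sigma>) = \<sigma>"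
proof -
  define M where "M = {i. \<sigma> i \<noteq> i}"
  define D where "D = agr p \<sigma>"
  have fM: "finite M" unfolding M_def using fin_moved[OF sp] .
  have DM: "D \<subseteq> M" unfolding D_def M_def agr_def by auto
  have fD: "finite D" using DM fM by (rule finite_subset)
  have "card (M - D) = 1" using card_Diff_subset[OF fD DM] cM cD r1 unfolding M_def D_def by simp
  then obtain j where Mj: "M - D = {j}" by (rule card_1_singletonE)
  have jM: "j \<in> M" and jD: "j \<notin> D" using Mj by auto
  have MjD: "M = insert j D" using Mj DM by auto
  have injs: "inj \<sigma>" using sp by (rule permutes_inj)
  have injp: "inj p" using pp by (rule permutes_inj)
  have sMM: "\<sigma> ` M \<subseteq> M" unfolding M_def using injs by (auto simp: inj_eq)
  have sM: "\<sigma> ` M = M"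
    using card_subset_eq[OF fM sMM] card_image[OF inj_on_subset[OF injs]] by auto
  have sDpD: "\<sigma> ` D = p ` D" unfolding D_def agr_def by auto
  have pDM: "p ` D \<subseteq> M" using sM sDpD image_mono[OF DM, of \<sigma>] by auto
  have cpD: "card (p ` D) = card D" using card_image[OF inj_on_subset[OF injp]] by auto
  have sj: "\<sigma> j \<notin> \<sigma> ` D" using jD injs by (auto simp: inj_eq)
  have jpD: "j \<in> p ` D"
  proof (rule ccontr)
    assume "j \<notin> p ` D"
    then have "p ` D \<subseteq> D" using pDM MjD by auto
    then have "p ` D = D" using card_subset_eq[OF fD] cpD by auto
    then have "\<sigma> j \<notin> D" using sj sDpD by auto
    moreover have "\<sigma> j \<in> M" using sM jM by auto
    ultimately have "\<sigma> j = j" using MjD by auto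
    then show False using jM unfolding M_def by auto
  qed
  have ex1: "p ` D - D = {j}" using jpD jD pDM MjD by auto
  have "card (D - p ` D) = card (p ` D - D)"
  proof -
    have "card (D - p`D) = card D - card (D \<inter> p`D)" using fD by (simp add: card_Diff_subset_Int)
    moreover have "card (p`D - D) = card (p`D) - card (p`D \<inter> D)" using fD by (simp add: card_Diff_subset_Int)
    ultimately show ?thesis using cpD by (simp add: Int_commute)
  qed
  then have "card (D - p ` D) = 1" using ex1 by simp
  then obtain a where ea: "D - p ` D = {a}" by (rule card_1_singletonE)
  have "\<sigma> j \<in> M" using sM jM by auto
  moreover have "\<sigma> j \<notin> p ` D" using sj sDpD by simp
  ultimately have "\<sigma> j \<in> D - p ` D" using MjD jpD by auto
  then have sja: "\<sigma> j = a" using ea by simp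
  have pja: "p j \<noteq> a" using jD jM sja unfolding D_def agr_def M_def by auto
  have DS: "D \<subseteq> {i\<in>{1..n}. p i \<noteq> i}"
  proof
    fix i assume "i \<in> D"
    then have "\<sigma> i \<noteq> i" "\<sigma> i = p i" unfolding D_def agr_def by auto
    then show "i \<in> {i\<in>{1..n}. p i \<noteq> i}" using permutes_not_in[OF sp] by fastforce
  qed
  have "D \<in> ADM p {i\<in>{1..n}. p i \<noteq> i} (r - 1)"
    unfolding ADM_def using DS cD ex1 ea pja unfolding D_def by blast
  moreover have "mk p D = \<sigma>"
  proof
    fix x show "mk p D x = \<sigma> x"
    proof (cases "x \<in> D")
      case True then show ?thesis unfolding mk_def D_def agr_def by auto
    next
      case False
      show ?thesis
      proof (cases "x = j")
        case True then show ?thesis using False ex1 ea sja unfolding mk_def by simp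
      next
        case False2: False
        then have "x \<notin> M" using False MjD by auto
        then show ?thesis using False False2 ex1 ea unfolding mk_def M_def by auto
      qed
    qed
  qed
  ultimately show ?thesis unfolding D_def by simp
qed

lemma A2:
  assumes pp: "p permutes {1..n}" and DA: "D \<in> ADM p {i\<in>{1..n}. p i \<noteq> i} R"
  shows "mk p D permutes {1..n} \<and> card {i. mk p D i \<noteq> i} = Suc R \<and> agr p (mk p D) = D"
proof -
  obtain j a where DS: "D \<subseteq> {i\<in>{1..n}. p i \<noteq> i}" and cD: "card D = R"
    and ej: "p`D - D = {j}" and ea: "D - p`D = {a}" and pja: "p j \<noteq> a"
    using DA unfolding ADM_def by blast
  have fD: "finite D" using DS by (rule finite_subset) simp
  have injp: "inj p" using pp by (rule permutes_inj)
  have jD: "j \<notin> D" and jpD: "j \<in> p`D" using ej by auto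
  have aD: "a \<in> D" and apD: "a \<notin> p`D" using ea by auto
  have mkx: "mk p D x = (if x \<in> D then p x else if x = j then a else x)" for x
    unfolding mk_def using ej ea by simp
  have Dn: "D \<subseteq> {1..n}" using DS by auto
  obtain x0 where "x0 \<in> D" "j = p x0" using jpD by auto
  then have jn: "j \<in> {1..n}" using Dn permutes_in_image[OF pp, of x0] by auto
  have inj: "inj_on (mk p D) {1..n}"
  proof (rule inj_onI)
    fix x y assume "x \<in> {1..n}" "y \<in> {1..n}" and e: "mk p D x = mk p D y"
    have pD: "\<And>z. z \<in> D \<Longrightarrow> p z \<noteq> a" using apD by auto
    have pD2: "\<And>z w. z \<in> D \<Longrightarrow> w \<notin> D \<Longrightarrow> w \<noteq> j \<Longrightarrow> p z \<noteq> w" using ej by blast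
    show "x = y"
    proof (cases "x \<in> D")
      case xD: True
      show ?thesis
      proof (cases "y \<in> D")
        case True then show ?thesis using xD e injp by (simp add: mkx inj_eq)
      next
        case False
        then show ?thesis using xD e pD pD2 by (simp add: mkx split: if_splits)
      qed
    next
      case xD: False
      show ?thesis
      proof (cases "y \<in> D")
        case True then show ?thesis using xD e pD pD2 by (simp add: mkx split: if_splits) metis+
      next
        case False
        then show ?thesis using xD e aD by (simp add: mkx split: if_splits)
      qed
    qed
  qed
  have img: "mk p D ` {1..n} \<subseteq> {1..n}"
  proof
    fix y assume "y \<in> mk p D ` {1..n}"
    then obtain x where x: "x \<in> {1..n}" "y = mk p D x" by auto
    show "y \<in> {1..n}" using x Dn aD permutes_in_image[OF pp] by (auto simp: mkx)
  qed
  have bij: "bij_betw (mk p D) {1..n} {1..n}"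
    using inj img by (simp add: bij_betw_def endo_inj_surj)
  have perm: "mk p D permutes {1..n}"
    by (rule bij_imp_permutes[OF bij]) (use Dn jn in \<open>auto simp: mkx\<close>)
  have mv: "{i. mk p D i \<noteq> i} = insert j D"
    using DS jD aD by (auto simp: mkx)
  have agr: "agr p (mk p D) = D"
    using DS jD aD pja by (auto simp: mkx agr_def)
  show ?thesis using perm mv agr jD fD cD by simp
qed

lemma N3_card:
  assumes pp: "p permutes {1..n}" and r1: "r \<ge> 1"
  shows "card {\<sigma> \<in> Sym n. card (Tc \<sigma> \<inter> Tc p) = r - 1 \<and> card (Tc \<sigma>) = r}
       = card (ADM p {i\<in>{1..n}. p i \<noteq> i} (r - 1))"
proof -
  let ?A = "{\<sigma> \<in> Sym n. card (Tc \<sigma> \<inter> Tc p) = r - 1 \<and> card (Tc \<sigma>) = r}"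
  let ?B = "ADM p {i\<in>{1..n}. p i \<noteq> i} (r - 1)"
  have memA: "\<sigma> \<in> ?A \<longleftrightarrow> \<sigma> permutes {1..n} \<and> card (agr p \<sigma>) = r - 1 \<and> card {i. \<sigma> i \<noteq> i} = r" for \<sigma>
    using card_Tc[OF fin_moved] card_Tc_int unfolding Sym_def by auto
  have "bij_betw (agr p) ?A ?B"
  proof (rule bij_betw_byWitness[where f'="mk p"])
    have "agr p \<sigma> \<in> ?B \<and> mk p (agr p \<sigma>) = \<sigma>" if "\<sigma> \<in> ?A" for \<sigma>
    proof -
      have "\<sigma> permutes {1..n}" "card (agr p \<sigma>) = r - 1" "card {i. \<sigma> i \<noteq> i} = r"
        using that memA by auto
      then show ?thesis using A1[OF _ pp _ _ r1] by blast
    qed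
    then show "\<forall>a\<in>?A. mk p (agr p a) = a" "agr p ` ?A \<subseteq> ?B" by auto
    show "\<forall>a'\<in>?B. agr p (mk p a') = a'" using A2[OF pp] by blast
    show "mk p ` ?B \<subseteq> ?A"
    proof
      fix \<sigma> assume "\<sigma> \<in> mk p ` ?B"
      then obtain D where D: "D \<in> ?B" "\<sigma> = mk p D" by auto
      have cD: "card D = r - 1" using D(1) unfolding ADM_def by simp
      have "\<sigma> permutes {1..n} \<and> card {i. \<sigma> i \<noteq> i} = Suc (r - 1) \<and> agr p \<sigma> = D"
        using A2[OF pp D(1)] D(2) by simp
      then show "\<sigma> \<in> ?A" using r1 memA cD by simp
    qed
  qed
  then show ?thesis by (rule bij_betw_same_card)
qed


definition cl :: "(nat\<Rightarrow>nat) \<Rightarrow> nat \<Rightarrow> nat" where "cl p x = funpow_dist1 p x x"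
definition arc :: "(nat\<Rightarrow>nat) \<Rightarrow> nat \<Rightarrow> nat \<Rightarrow> nat set" where
  "arc p a d = (\<lambda>k. (p ^^ k) a) ` {0..<d}"

locale pctx =
  fixes p :: "nat \<Rightarrow> nat" and n :: nat
  assumes pp: "p permutes {1..n}"
begin

definition "S = {i\<in>{1..n}. p i \<noteq> i}"
definition "cyc = nontriv_cycles n p"

lemma perm: "permutation p"
  using pp permutation_permutes by blast

lemma self_in: "x \<in> orbit p x"
  using perm by (rule permutation_self_in_orbit)

lemma orbit_im: "orbit p x = (\<lambda>k. (p ^^ k) x) ` {0..<cl p x}"
  unfolding cl_def using orbit_conv_funpow_dist1[OF self_in] .

lemma cl_pos: "cl p x > 0" unfolding cl_def by simp

lemma funpow_cl: "(p ^^ cl p x) x = x"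
  unfolding cl_def using funpow_dist1_prop[OF self_in] .

lemma funpow_inj: "k < cl p x \<Longrightarrow> l < cl p x \<Longrightarrow> (p ^^ k) x = (p ^^ l) x \<longleftrightarrow> k = l"
  using inj_on_funpow_dist1[OF self_in, of x] unfolding cl_def inj_on_def by auto

lemma card_orbit: "card (orbit p x) = cl p x"
  unfolding orbit_im using funpow_inj by (subst card_image) (auto simp: inj_on_def)

lemma finite_orbit': "finite (orbit p x)"
  unfolding orbit_im by simp

lemma funpow_mod: "(p ^^ k) x = (p ^^ (k mod cl p x)) x"
  using funpow_cl by (simp add: funpow_mod_eq)

lemma funpow_in: "(p ^^ k) x \<in> orbit p x"
  using funpow_in_orbit[OF self_in] .

lemma orbit_mem: "y \<in> orbit p x \<longleftrightarrow> (\<exists>k. y = (p ^^ k) x)"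
  using orbit_altdef_permutation[OF perm] by auto

lemma orbit_eq: assumes "y \<in> orbit p x" shows "orbit p y = orbit p x"
proof
  show "orbit p y \<subseteq> orbit p x" using orbit_trans[OF _ assms] by blast
  have xy: "x \<in> orbit p y" using orbit_swap[OF self_in assms] .
  show "orbit p x \<subseteq> orbit p y" using orbit_trans[OF _ xy] by blast
qed

lemma orbit_disj: assumes "orbit p x \<noteq> orbit p y" shows "orbit p x \<inter> orbit p y = {}"
proof (rule ccontr)
  assume "orbit p x \<inter> orbit p y \<noteq> {}"
  then obtain z where "z \<in> orbit p x" "z \<in> orbit p y" by blast
  then show False using orbit_eq[of z x] orbit_eq[of z y] assms by simp
qed

lemma p_orbit: "p ` orbit p x = orbit p x"
proof
  show "p ` orbit p x \<subseteq> orbit p x"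
  proof
    fix z assume "z \<in> p ` orbit p x"
    then obtain y where "y \<in> orbit p x" "z = p y" by blast
    then show "z \<in> orbit p x" by (simp add: orbit.step)
  qed
  show "orbit p x \<subseteq> p ` orbit p x"
  proof
    fix y assume y: "y \<in> orbit p x"
    have "y = (p ^^ cl p y) y" by (rule funpow_cl[symmetric])
    also have "\<dots> = p ((p ^^ (cl p y - 1)) y)" using cl_pos[of y]
      by (cases "cl p y") auto
    finally have e: "y = p ((p ^^ (cl p y - 1)) y)" .
    have "(p ^^ (cl p y - 1)) y \<in> orbit p x" using funpow_in[of "cl p y - 1" y] orbit_eq[OF y] by simp
    then show "y \<in> p ` orbit p x" using e by (rule rev_image_eqI)
  qed
qed

lemma funpow_n: assumes "x \<in> {1..n}" shows "(p ^^ k) x \<in> {1..n}"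
proof (induction k)
  case 0 then show ?case using assms by simp
next
  case (Suc k) then show ?case using permutes_in_image[OF pp, of "(p^^k) x"] by (simp del: atLeastAtMost_iff)
qed

lemma orbit_n: "x \<in> {1..n} \<Longrightarrow> orbit p x \<subseteq> {1..n}"
  using funpow_n orbit_mem by auto

lemma orbit_S: "x \<in> S \<Longrightarrow> orbit p x \<subseteq> S"
proof
  fix y assume x: "x \<in> S" and y: "y \<in> orbit p x"
  have xn: "x \<in> {1..n}" using x unfolding S_def by blast
  have "y \<in> {1..n}" using orbit_n[OF xn] y by blast
  moreover have "p y \<noteq> y"
  proof
    assume "p y = y"
    then have "orbit p y = {y}" using orbit_eq_singleton_iff by metis
    then have "orbit p x = {y}" using orbit_eq[OF y] by simp
    then have "x = y" using self_in[of x] by simp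
    then show False using x \<open>p y = y\<close> unfolding S_def by simp
  qed
  ultimately show "y \<in> S" unfolding S_def by simp
qed

lemma cl_ge2: "x \<in> S \<Longrightarrow> cl p x \<ge> 2"
proof -
  assume x: "x \<in> S"
  have "cl p x \<noteq> 1"
  proof
    assume "cl p x = 1"
    then have "(p ^^ 1) x = x" using funpow_cl by metis
    then show False using x unfolding S_def by simp
  qed
  then show ?thesis using cl_pos[of x] by linarith
qed

lemma cyc_def2: "cyc = orbit p ` S"
  unfolding cyc_def nontriv_cycles_def S_def by auto

lemma finite_S: "finite S" unfolding S_def by simp

lemma finite_cyc: "finite cyc" unfolding cyc_def2 using finite_S by simp

lemma S_Union: "S = \<Union> cyc"
  unfolding cyc_def2 using orbit_S self_in by blast

lemma cyc_disj: "C1 \<in> cyc \<Longrightarrow> C2 \<in> cyc \<Longrightarrow> C1 \<noteq> C2 \<Longrightarrow> C1 \<inter> C2 = {}"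
  unfolding cyc_def2 using orbit_disj by blast

lemma cyc_fin: "C \<in> cyc \<Longrightarrow> finite C"
  unfolding cyc_def2 using finite_orbit' by blast

lemma cyc_p: "C \<in> cyc \<Longrightarrow> p ` C = C"
  unfolding cyc_def2 using p_orbit by blast

lemma cyc_mem: "C \<in> cyc \<Longrightarrow> x \<in> C \<Longrightarrow> orbit p x = C"
  unfolding cyc_def2 using orbit_eq by blast

lemma card_Union_cyc: assumes "F \<subseteq> cyc" shows "card (\<Union>F) = (\<Sum>C\<in>F. card C)"
proof (rule card_Union_disjoint)
  show "pairwise disjnt F"
  proof (rule pairwiseI)
    fix A B assume "A \<in> F" "B \<in> F" "A \<noteq> B"
    then show "disjnt A B" using cyc_disj[of A B] assms by (auto simp: disjnt_def)
  qed
  show "A \<in> F \<Longrightarrow> finite A" for A using cyc_fin assms by blast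
qed


definition PAR :: "nat \<Rightarrow> (nat \<times> nat \<times> nat set set) set" where
 "PAR R = Sigma S (\<lambda>a. Sigma {1..cl p a - 2} (\<lambda>d. {F. F \<subseteq> cyc - {orbit p a} \<and> d + (\<Sum>C\<in>F. card C) = R}))"

definition phi :: "nat \<times> nat \<times> nat set set \<Rightarrow> nat set" where
 "phi = (\<lambda>(a,d,F). \<Union>F \<union> arc p a d)"

lemma arc_mem: "z \<in> arc p a d \<longleftrightarrow> (\<exists>k<d. z = (p ^^ k) a)"
  unfolding arc_def by auto

lemma p_arc_mem: "z \<in> p ` arc p a d \<longleftrightarrow> (\<exists>k. 1 \<le> k \<and> k \<le> d \<and> z = (p ^^ k) a)"
proof
  assume "z \<in> p ` arc p a d"
  then obtain k where "k < d" "z = p ((p ^^ k) a)" unfolding arc_def by auto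
  then show "\<exists>k. 1 \<le> k \<and> k \<le> d \<and> z = (p ^^ k) a" by (intro exI[of _ "Suc k"]) auto
next
  assume "\<exists>k. 1 \<le> k \<and> k \<le> d \<and> z = (p ^^ k) a"
  then obtain k where k: "1 \<le> k" "k \<le> d" "z = (p ^^ k) a" by blast
  then obtain k' where "k = Suc k'" by (cases k) auto
  then have "z = p ((p ^^ k') a)" "k' < d" using k by auto
  then show "z \<in> p ` arc p a d" unfolding arc_def by auto
qed

lemma arc_sub: "arc p a d \<subseteq> orbit p a"
  unfolding arc_def using funpow_in by blast

lemma card_arc: "d \<le> cl p a \<Longrightarrow> card (arc p a d) = d"
  unfolding arc_def by (subst card_image) (auto simp: inj_on_def funpow_inj)

lemma phi_props:
  assumes a: "a \<in> S" and d1: "1 \<le> d" and d2: "d + 2 \<le> cl p a" and F: "F \<subseteq> cyc - {orbit p a}"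
  shows "\<Union>F \<union> arc p a d \<subseteq> S"
    and "card (\<Union>F \<union> arc p a d) = d + (\<Sum>C\<in>F. card C)"
    and "p ` (\<Union>F \<union> arc p a d) - (\<Union>F \<union> arc p a d) = {(p ^^ d) a}"
    and "(\<Union>F \<union> arc p a d) - p ` (\<Union>F \<union> arc p a d) = {a}"
    and "p ((p ^^ d) a) \<noteq> a"
proof -
  let ?A = "arc p a d" and ?C = "orbit p a"
  have Ccyc: "?C \<in> cyc" using a unfolding cyc_def2 by blast
  have Fc: "F \<subseteq> cyc" using F by blast
  have disj: "\<Union>F \<inter> ?C = {}"
  proof -
    have "C' \<inter> ?C = {}" if "C' \<in> F" for C' using cyc_disj[of C' ?C] that F Ccyc by blast
    then show ?thesis by blast
  qed
  have AC: "?A \<subseteq> ?C" by (rule arc_sub)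
  have pAC: "p ` ?A \<subseteq> ?C" using image_mono[OF AC, of p] p_orbit by simp
  have pF: "p ` \<Union>F = \<Union>F"
  proof -
    have "p ` \<Union>F = (\<Union>C\<in>F. p ` C)" by (rule image_Union)
    also have "\<dots> = (\<Union>C\<in>F. C)" using cyc_p Fc by (intro SUP_cong) auto
    finally show ?thesis by simp
  qed
  have pD: "p ` (\<Union>F \<union> ?A) = \<Union>F \<union> p ` ?A" using pF by (simp add: image_Un)
  have c: "cl p a = card ?C" by (simp add: card_orbit)
  have inj: "\<And>k l. k < cl p a \<Longrightarrow> l < cl p a \<Longrightarrow> (p ^^ k) a = (p ^^ l) a \<longleftrightarrow> k = l" by (rule funpow_inj)
  have e1: "p ` ?A - ?A = {(p ^^ d) a}"
  proof
    show "p ` ?A - ?A \<subseteq> {(p ^^ d) a}"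
    proof
      fix z assume z: "z \<in> p ` ?A - ?A"
      then obtain k where k: "1 \<le> k" "k \<le> d" "z = (p ^^ k) a" using p_arc_mem by blast
      have "\<not> k < d" using z k(3) arc_mem by blast
      then show "z \<in> {(p ^^ d) a}" using k by simp
    qed
    have "(p ^^ d) a \<in> p ` ?A" using p_arc_mem d1 by blast
    moreover have "(p ^^ d) a \<notin> ?A"
    proof
      assume "(p ^^ d) a \<in> ?A"
      then obtain k where "k < d" "(p ^^ d) a = (p ^^ k) a" using arc_mem by blast
      then show False using inj[of d k] d2 by simp
    qed
    ultimately show "{(p ^^ d) a} \<subseteq> p ` ?A - ?A" by blast
  qed
  have e2: "?A - p ` ?A = {a}"
  proof
    show "?A - p ` ?A \<subseteq> {a}"
    proof
      fix z assume z: "z \<in> ?A - p ` ?A"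
      then obtain k where k: "k < d" "z = (p ^^ k) a" using arc_mem by blast
      have "k = 0"
      proof (rule ccontr)
        assume "k \<noteq> 0"
        then have "z \<in> p ` ?A" using p_arc_mem k by (metis less_imp_le_nat less_one not_less)
        then show False using z by blast
      qed
      then show "z \<in> {a}" using k by simp
    qed
    have "a \<in> ?A" using arc_mem[of a a d] d1 by (metis funpow_0 less_one less_le_trans)
    moreover have "a \<notin> p ` ?A"
    proof
      assume "a \<in> p ` ?A"
      then obtain k where k: "1 \<le> k" "k \<le> d" "a = (p ^^ k) a" using p_arc_mem by blast
      then have "(p ^^ k) a = (p ^^ 0) a" by simp
      then show False using inj[of k 0] k d2 by simp
    qed
    ultimately show "{a} \<subseteq> ?A - p ` ?A" by blast
  qed
  have "\<Union>F \<subseteq> S" using S_Union Fc by blast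
  moreover have "?A \<subseteq> S" using AC orbit_S[OF a] by blast
  ultimately show "\<Union>F \<union> ?A \<subseteq> S" by blast
  have fU: "finite (\<Union>F)" using Fc finite_cyc cyc_fin by (meson finite_Union finite_subset subsetD)
  have "card (\<Union>F \<union> ?A) = card (\<Union>F) + card ?A"
    using disj AC fU by (intro card_Un_disjoint) (auto simp: arc_def)
  then show "card (\<Union>F \<union> ?A) = d + (\<Sum>C\<in>F. card C)"
    using card_Union_cyc[OF Fc] card_arc[of d a] d2 by simp
  have i1: "p ` ?A \<inter> \<Union>F = {}" using pAC disj by auto
  have i2: "?A \<inter> \<Union>F = {}" using AC disj by auto
  have "p ` (\<Union>F \<union> ?A) - (\<Union>F \<union> ?A) = p ` ?A - ?A" unfolding pD using i1 by auto
  then show "p ` (\<Union>F \<union> ?A) - (\<Union>F \<union> ?A) = {(p ^^ d) a}" using e1 by simp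
  have "(\<Union>F \<union> ?A) - p ` (\<Union>F \<union> ?A) = ?A - p ` ?A" unfolding pD using i2 by auto
  then show "(\<Union>F \<union> ?A) - p ` (\<Union>F \<union> ?A) = {a}" using e2 by simp
  show "p ((p ^^ d) a) \<noteq> a"
  proof
    assume "p ((p ^^ d) a) = a"
    then have "(p ^^ Suc d) a = (p ^^ 0) a" by simp
    then show False using inj[of "Suc d" 0] d2 by simp
  qed
qed


lemma cyc_nonempty: "C \<in> cyc \<Longrightarrow> C \<noteq> {}"
  unfolding cyc_def2 using self_in by blast

lemma orbit_in_cyc: "y \<in> S \<Longrightarrow> orbit p y \<in> cyc"
  unfolding cyc_def2 by blast

lemma adm_decomp:
  assumes DA: "D \<in> ADM p S R"
  shows "\<exists>a d F. (a, d, F) \<in> PAR R \<and> D = \<Union>F \<union> arc p a d"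
proof -
  obtain j a where DS: "D \<subseteq> S" and cD: "card D = R"
    and ej: "p`D - D = {j}" and ea: "D - p`D = {a}" and pja: "p j \<noteq> a"
    using DA unfolding ADM_def by blast
  have aD: "a \<in> D" and apD: "a \<notin> p ` D" using ea by auto
  have aS: "a \<in> S" using aD DS by blast
  define x where "x = (\<lambda>k. (p ^^ k) a)"
  define c where "c = cl p a"
  have c2: "c \<ge> 2" unfolding c_def using cl_ge2[OF aS] .
  have injx: "\<And>k l. k < c \<Longrightarrow> l < c \<Longrightarrow> x k = x l \<longleftrightarrow> k = l" unfolding x_def c_def by (rule funpow_inj)
  have xS: "x (Suc k) = p (x k)" for k unfolding x_def by simp
  have x0: "x 0 = a" unfolding x_def by simp
  have xc: "x c = a" unfolding x_def c_def by (rule funpow_cl)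
  have xmod: "x k = x (k mod c)" for k unfolding x_def c_def by (rule funpow_mod)
  have injp: "inj p" using pp by (rule permutes_inj)
  have ex: "\<exists>k. x k \<notin> D"
  proof (rule ccontr)
    assume "\<not> (\<exists>k. x k \<notin> D)"
    then have "x (c - 1) \<in> D" by blast
    moreover have "p (x (c - 1)) = a"
    proof -
      have "Suc (c - 1) = c" using c2 by simp
      then show ?thesis using xS[of "c - 1"] xc by simp
    qed
    ultimately have "a \<in> p ` D" by (metis imageI)
    then show False using apD by simp
  qed
  define d where "d = (LEAST k. x k \<notin> D)"
  have xd: "x d \<notin> D" unfolding d_def using ex by (rule LeastI_ex)
  have below: "k < d \<Longrightarrow> x k \<in> D" for k unfolding d_def using not_less_Least by blast
  have d1: "d \<ge> 1" using xd aD x0 by (cases d) auto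
  have dc: "d < c"
  proof (rule ccontr)
    assume "\<not> d < c"
    moreover have "d mod c < c" using c2 by simp
    ultimately have "d mod c < d" by linarith
    then have "x (d mod c) \<in> D" by (rule below)
    then show False using xd xmod[of d] by simp
  qed
  have xdj: "x d = j"
  proof -
    have "x d = p (x (d - 1))" using xS[of "d - 1"] d1 by simp
    moreover have "x (d - 1) \<in> D" using below d1 by simp
    ultimately have "x d \<in> p ` D - D" using xd by blast
    then show ?thesis using ej by simp
  qed
  have dc2: "d + 2 \<le> c"
  proof (rule ccontr)
    assume "\<not> d + 2 \<le> c"
    then have "Suc d = c" using dc by simp
    then have "p j = a" using xS[of d] xc xdj by simp
    then show False using pja by simp
  qed
  have notD: "d + i < c \<Longrightarrow> x (d + i) \<notin> D" for i
  proof (induction i)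
    case 0 then show ?case using xd by simp
  next
    case (Suc i)
    show ?case
    proof
      assume xi: "x (d + Suc i) \<in> D"
      have "x (d + Suc i) \<noteq> x 0" using injx[of "d + Suc i" 0] Suc.prems c2 by simp
      then have "x (d + Suc i) \<noteq> a" using x0 by simp
      have "x (d + Suc i) \<in> p ` D"
      proof (rule ccontr)
        assume "x (d + Suc i) \<notin> p ` D"
        with xi have "x (d + Suc i) \<in> D - p ` D" by (rule DiffI)
        then have "x (d + Suc i) \<in> {a}" by (simp only: ea)
        then show False using \<open>x (d + Suc i) \<noteq> a\<close> by (simp only: singleton_iff)
      qed
      then obtain z where z: "z \<in> D" "p z = x (d + Suc i)" by (metis imageE)
      then have "p z = p (x (d + i))" using xS[of "d + i"] by simp
      then have "z = x (d + i)" using injp by (simp add: inj_eq)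
      then show False using z Suc.IH Suc.prems by simp
    qed
  qed
  let ?C = "orbit p a"
  have arc_eq: "arc p a d = (\<lambda>k. x k) ` {0..<d}" unfolding arc_def x_def by simp
  have DC: "D \<inter> ?C = arc p a d"
  proof
    have "x k \<in> ?C" for k unfolding x_def by (rule funpow_in)
    then show "arc p a d \<subseteq> D \<inter> ?C" using below unfolding arc_eq by auto
    show "D \<inter> ?C \<subseteq> arc p a d"
    proof
      fix y assume y: "y \<in> D \<inter> ?C"
      then obtain k where k: "k < c" "y = x k" using orbit_im[of a] unfolding x_def c_def by auto
      have "k < d"
      proof (rule ccontr)
        assume "\<not> k < d"
        then have "x (d + (k - d)) \<notin> D" using notD[of "k - d"] k by simp
        then show False using y k \<open>\<not> k < d\<close> by simp
      qed
      then show "y \<in> arc p a d" unfolding arc_eq using k by simp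
    qed
  qed
  have jC: "j \<in> ?C" using xdj funpow_in unfolding x_def by metis
  have closed: "orbit p y \<subseteq> D" if yD: "y \<in> D" and yC: "orbit p y \<noteq> ?C" for y
  proof
    fix z assume "z \<in> orbit p y"
    then obtain k where zk: "z = (p ^^ k) y" using orbit_mem by blast
    have "(p ^^ k) y \<in> D" for k
    proof (induction k)
      case 0 then show ?case using yD by simp
    next
      case (Suc k)
      have "p ((p ^^ k) y) \<in> D"
      proof (rule ccontr)
        assume "p ((p ^^ k) y) \<notin> D"
        then have "p ((p ^^ k) y) \<in> p ` D - D" using Suc.IH by blast
        then have "p ((p ^^ k) y) = j" using ej by simp
        moreover have "p ((p ^^ k) y) \<in> orbit p y" using funpow_in[of "Suc k" y] by simp
        ultimately have "j \<in> orbit p y" by simp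
        then have "orbit p j = orbit p y" "orbit p j = ?C" using orbit_eq jC by blast+
        then show False using yC by simp
      qed
      then show ?case by simp
    qed
    then show "z \<in> D" using zk by simp
  qed
  define F where "F = {C' \<in> cyc. C' \<noteq> ?C \<and> C' \<subseteq> D}"
  have Dphi: "D = \<Union>F \<union> arc p a d"
  proof
    show "D \<subseteq> \<Union>F \<union> arc p a d"
    proof
      fix y assume yD: "y \<in> D"
      show "y \<in> \<Union>F \<union> arc p a d"
      proof (cases "orbit p y = ?C")
        case True
        then have "y \<in> ?C" using self_in[of y] by simp
        then show ?thesis using DC yD by blast
      next
        case False
        have "orbit p y \<in> cyc" using orbit_in_cyc yD DS by blast
        then have "orbit p y \<in> F" unfolding F_def using closed[OF yD False] False by blast
        then show ?thesis using self_in[of y] by blast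
      qed
    qed
    show "\<Union>F \<union> arc p a d \<subseteq> D" unfolding F_def using DC by blast
  qed
  have Fsub: "F \<subseteq> cyc - {?C}" unfolding F_def by blast
  have cd: "card D = d + (\<Sum>C\<in>F. card C)"
    using phi_props(2)[OF aS d1 _ Fsub] dc2 Dphi unfolding c_def by simp
  have "(a, d, F) \<in> PAR R"
    unfolding PAR_def using aS d1 dc2 Fsub cd cD unfolding c_def by auto
  then show ?thesis using Dphi by blast
qed

lemma phi_inj:
  assumes "(a, d, F) \<in> PAR R" "(a', d', F') \<in> PAR R" and e: "\<Union>F \<union> arc p a d = \<Union>F' \<union> arc p a' d'"
  shows "a = a' \<and> d = d' \<and> F = F'"
proof -
  have aS: "a \<in> S" and d1: "1 \<le> d" and d2: "d + 2 \<le> cl p a" and F: "F \<subseteq> cyc - {orbit p a}"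
    and cF: "d + (\<Sum>C\<in>F. card C) = R"
    using assms(1) unfolding PAR_def by auto
  have aS': "a' \<in> S" and d1': "1 \<le> d'" and d2': "d' + 2 \<le> cl p a'" and F': "F' \<subseteq> cyc - {orbit p a'}"
    using assms(2) unfolding PAR_def by auto
  have "{a} = {a'}" using phi_props(4)[OF aS d1 d2 F] phi_props(4)[OF aS' d1' d2' F'] e by simp
  then have aa: "a = a'" by simp
  let ?C = "orbit p a"
  have Ccyc: "?C \<in> cyc" using aS unfolding cyc_def2 by blast
  have part: "(\<Union>G \<union> arc p a k) \<inter> ?C = arc p a k" if G: "G \<subseteq> cyc - {?C}" for G k
  proof -
    have "C' \<inter> ?C = {}" if "C' \<in> G" for C' by (rule cyc_disj) (use that G Ccyc in auto)
    then have "\<Union>G \<inter> ?C = {}" by auto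
    then show ?thesis using arc_sub[of a k] by auto
  qed
  have F'a: "F' \<subseteq> cyc - {?C}" using F' aa by simp
  have "arc p a d = (\<Union>F \<union> arc p a d) \<inter> ?C" using part[OF F, of d] by simp
  also have "\<dots> = (\<Union>F' \<union> arc p a d') \<inter> ?C" unfolding e using aa by simp
  also have "\<dots> = arc p a d'" using part[OF F'a, of d'] by simp
  finally have arcs: "arc p a d = arc p a d'" .
  have "d = card (arc p a d)" using card_arc[of d a] d2 by simp
  also have "\<dots> = card (arc p a d')" using arcs by simp
  also have "\<dots> = d'" using card_arc[of d' a] d2' aa by simp
  finally have dd: "d = d'" .
  have Fchar: "G = {C' \<in> cyc. C' \<noteq> ?C \<and> C' \<subseteq> \<Union>G \<union> arc p a d}" if G: "G \<subseteq> cyc - {?C}" for G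
  proof
    show "G \<subseteq> {C' \<in> cyc. C' \<noteq> ?C \<and> C' \<subseteq> \<Union>G \<union> arc p a d}" using G by blast
    show "{C' \<in> cyc. C' \<noteq> ?C \<and> C' \<subseteq> \<Union>G \<union> arc p a d} \<subseteq> G"
    proof
      fix C' assume C': "C' \<in> {C' \<in> cyc. C' \<noteq> ?C \<and> C' \<subseteq> \<Union>G \<union> arc p a d}"
      then have C'c: "C' \<in> cyc" and ne: "C' \<noteq> ?C" and sub: "C' \<subseteq> \<Union>G \<union> arc p a d" by auto
      obtain y where y: "y \<in> C'" using cyc_nonempty[OF C'c] by blast
      have "C' \<inter> ?C = {}" using cyc_disj[OF C'c Ccyc ne] .
      then have "y \<notin> arc p a d" using y arc_sub[of a d] by blast
      then obtain C'' where C'': "C'' \<in> G" "y \<in> C''" using y sub by blast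
      have "C'' \<in> cyc" using C'' G by blast
      then have "C'' = C'" using cyc_disj[of C'' C'] C'' y C'c by blast
      then show "C' \<in> G" using C'' by simp
    qed
  qed
  have "F = {C' \<in> cyc. C' \<noteq> ?C \<and> C' \<subseteq> \<Union>F \<union> arc p a d}" by (rule Fchar[OF F])
  also have "\<dots> = {C' \<in> cyc. C' \<noteq> ?C \<and> C' \<subseteq> \<Union>F' \<union> arc p a d}" unfolding e using aa dd by simp
  also have "\<dots> = F'" using Fchar[OF F'a] by simp
  finally have "F = F'" .
  then show ?thesis using aa dd by simp
qed

lemma card_ADM: "card (ADM p S R) = card (PAR R)"
proof -
  have "bij_betw phi (PAR R) (ADM p S R)"
    unfolding bij_betw_def
  proof
    show "inj_on phi (PAR R)"
    proof (rule inj_onI)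
      fix u v assume u: "u \<in> PAR R" and v: "v \<in> PAR R" and e: "phi u = phi v"
      obtain a d F where uu: "u = (a, d, F)" by (cases u) auto
      obtain a' d' F' where vv: "v = (a', d', F')" by (cases v) auto
      have "\<Union>F \<union> arc p a d = \<Union>F' \<union> arc p a' d'" using e unfolding uu vv phi_def by simp
      then have "a = a' \<and> d = d' \<and> F = F'" using phi_inj[of a d F R a' d' F'] u v unfolding uu vv by blast
      then show "u = v" unfolding uu vv by simp
    qed
    show "phi ` PAR R = ADM p S R"
    proof
      show "phi ` PAR R \<subseteq> ADM p S R"
      proof
        fix D assume "D \<in> phi ` PAR R"
        then obtain u where u0: "u \<in> PAR R" "D = phi u" by (rule imageE) auto
        obtain a d F where uu: "u = (a, d, F)" by (cases u) auto
        have u: "(a, d, F) \<in> PAR R" using u0 uu by simp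
        have D: "D = \<Union>F \<union> arc p a d" using u0 uu unfolding phi_def by simp
        have aS: "a \<in> S" and d1: "1 \<le> d" and d2: "d + 2 \<le> cl p a" and F: "F \<subseteq> cyc - {orbit p a}"
          and cF: "d + (\<Sum>C\<in>F. card C) = R"
          using u unfolding PAR_def by auto
        note pr = phi_props[OF aS d1 d2 F]
        show "D \<in> ADM p S R" unfolding ADM_def mem_Collect_eq
        proof (intro conjI exI)
          show "D \<subseteq> S" using pr(1) D by simp
          show "card D = R" using pr(2) cF D by simp
          show "p ` D - D = {(p ^^ d) a}" using pr(3) D by simp
          show "D - p ` D = {a}" using pr(4) D by simp
          show "p ((p ^^ d) a) \<noteq> a" by (rule pr(5))
        qed
      qed
      show "ADM p S R \<subseteq> phi ` PAR R"
      proof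
        fix D assume "D \<in> ADM p S R"
        then have "\<exists>a d F. (a, d, F) \<in> PAR R \<and> D = \<Union>F \<union> arc p a d" by (rule adm_decomp)
        then obtain a d F where u: "(a, d, F) \<in> PAR R" and D: "D = \<Union>F \<union> arc p a d" by blast
        have "D = phi (a, d, F)" unfolding phi_def D by simp
        then show "D \<in> phi ` PAR R" using u by (rule rev_image_eqI[rotated])
      qed
    qed
  qed
  then show ?thesis by (simp add: bij_betw_same_card)
qed

end


context pctx begin

lemma card_PAR:
  "card (PAR R) = (\<Sum>C\<in>cyc. card C * (\<Sum>d\<in>{1..card C - 2}.
      card {F. F \<subseteq> cyc - {C} \<and> d + (\<Sum>C'\<in>F. card C') = R}))"
proof -
  define G where "G C = (\<Sum>d\<in>{1..card C - 2}. card {F. F \<subseteq> cyc - {C} \<and> d + (\<Sum>C'\<in>F. card C') = R})" for C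
  have finF: "finite {F. F \<subseteq> cyc - {C} \<and> Q F}" for C Q
  proof (rule finite_subset)
    show "{F. F \<subseteq> cyc - {C} \<and> Q F} \<subseteq> Pow cyc" by blast
    show "finite (Pow cyc)" using finite_cyc by simp
  qed
  have "card (PAR R) = (\<Sum>a\<in>S. card (Sigma {1..cl p a - 2} (\<lambda>d. {F. F \<subseteq> cyc - {orbit p a} \<and> d + (\<Sum>C\<in>F. card C) = R})))"
    unfolding PAR_def using finite_S finF by (subst card_SigmaI) auto
  also have "\<dots> = (\<Sum>a\<in>S. G (orbit p a))"
  proof (rule sum.cong)
    fix a assume "a \<in> S"
    show "card (Sigma {1..cl p a - 2} (\<lambda>d. {F. F \<subseteq> cyc - {orbit p a} \<and> d + (\<Sum>C\<in>F. card C) = R})) = G (orbit p a)"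
      unfolding G_def card_orbit using finF by (subst card_SigmaI) auto
  qed simp
  also have "\<dots> = (\<Sum>C\<in>cyc. (\<Sum>a\<in>C. G (orbit p a)))"
    unfolding S_Union
  proof (subst sum.Union_disjoint)
    show "\<forall>A\<in>cyc. finite A" using cyc_fin by blast
    show "\<forall>A\<in>cyc. \<forall>B\<in>cyc. A \<noteq> B \<longrightarrow> A \<inter> B = {}" using cyc_disj by blast
  qed simp
  also have "\<dots> = (\<Sum>C\<in>cyc. card C * G C)"
  proof (rule sum.cong)
    fix C assume C: "C \<in> cyc"
    have "(\<Sum>a\<in>C. G (orbit p a)) = (\<Sum>a\<in>C. G C)" using cyc_mem[OF C] by simp
    then show "(\<Sum>a\<in>C. G (orbit p a)) = card C * G C" by simp
  qed simp
  finally show ?thesis unfolding G_def .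
qed

end

lemma cnt_two:
  assumes K: "finite K" and two: "\<forall>C\<in>K. card C = 2"
  shows "card {F. F \<subseteq> K \<and> e + (\<Sum>C\<in>F. card C) = R}
       = (if e \<le> R \<and> even (R - e) then card K choose ((R - e) div 2) else 0)"
proof -
  have sF: "(\<Sum>C\<in>F. card C) = 2 * card F" if "F \<subseteq> K" for F
  proof -
    have "(\<Sum>C\<in>F. card C) = (\<Sum>C\<in>F. 2)" using two that by (intro sum.cong) auto
    then show ?thesis by simp
  qed
  have eq: "{F. F \<subseteq> K \<and> e + (\<Sum>C\<in>F. card C) = R} = {F. F \<subseteq> K \<and> e + 2 * card F = R}"
    using sF by auto
  show ?thesis
  proof (cases "e \<le> R \<and> even (R - e)")
    case True
    then have "{F. F \<subseteq> K \<and> e + 2 * card F = R} = {F. F \<subseteq> K \<and> card F = (R - e) div 2}"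
      by (auto elim!: evenE)
    then have "card {F. F \<subseteq> K \<and> e + (\<Sum>C\<in>F. card C) = R} = card K choose ((R - e) div 2)"
      using eq n_subsets[OF K] by simp
    then show ?thesis by (simp only: if_P[OF True])
  next
    case False
    then have "{F. F \<subseteq> K \<and> e + 2 * card F = R} = {}" by auto
    then have "card {F. F \<subseteq> K \<and> e + (\<Sum>C\<in>F. card C) = R} = 0" using eq by (metis card.empty)
    then show ?thesis by (simp only: if_not_P[OF False])
  qed
qed

lemma cnt_insert:
  assumes K: "finite K" and X: "X \<notin> K"
  shows "card {F. F \<subseteq> insert X K \<and> e + (\<Sum>C\<in>F. card C) = R}
       = card {F. F \<subseteq> K \<and> e + (\<Sum>C\<in>F. card C) = R}
       + card {F. F \<subseteq> K \<and> (e + card X) + (\<Sum>C\<in>F. card C) = R}"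
proof -
  let ?A = "{F. F \<subseteq> K \<and> e + (\<Sum>C\<in>F. card C) = R}"
  let ?B = "{F. F \<subseteq> K \<and> (e + card X) + (\<Sum>C\<in>F. card C) = R}"
  have eq: "{F. F \<subseteq> insert X K \<and> e + (\<Sum>C\<in>F. card C) = R} = ?A \<union> insert X ` ?B"
  proof
    show "{F. F \<subseteq> insert X K \<and> e + (\<Sum>C\<in>F. card C) = R} \<subseteq> ?A \<union> insert X ` ?B"
    proof
      fix F assume F: "F \<in> {F. F \<subseteq> insert X K \<and> e + (\<Sum>C\<in>F. card C) = R}"
      then have Fs: "F \<subseteq> insert X K" and Fe: "e + (\<Sum>C\<in>F. card C) = R" by auto
      have fF: "finite F" using Fs K finite_subset by auto
      show "F \<in> ?A \<union> insert X ` ?B"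
      proof (cases "X \<in> F")
        case False
        then have "F \<subseteq> K" using Fs by blast
        then show ?thesis using Fe by simp
      next
        case True
        have "(\<Sum>C\<in>F. card C) = card X + (\<Sum>C\<in>F - {X}. card C)"
          using fF True by (simp add: sum.remove)
        then have "F - {X} \<in> ?B" using Fs Fe by auto
        moreover have "F = insert X (F - {X})" using True by auto
        ultimately show ?thesis by blast
      qed
    qed
    show "?A \<union> insert X ` ?B \<subseteq> {F. F \<subseteq> insert X K \<and> e + (\<Sum>C\<in>F. card C) = R}"
    proof
      fix F assume "F \<in> ?A \<union> insert X ` ?B"
      then show "F \<in> {F. F \<subseteq> insert X K \<and> e + (\<Sum>C\<in>F. card C) = R}"
      proof
        assume "F \<in> ?A" then show ?thesis by auto
      next
        assume "F \<in> insert X ` ?B"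
        then obtain G where G: "G \<in> ?B" "F = insert X G" by auto
        have "finite G" using G K finite_subset by auto
        moreover have "X \<notin> G" using G X by auto
        ultimately have "(\<Sum>C\<in>F. card C) = card X + (\<Sum>C\<in>G. card C)" using G by simp
        then show ?thesis using G by auto
      qed
    qed
  qed
  have finA: "finite ?A" by (rule finite_subset[of _ "Pow K"]) (use K in auto)
  have finB: "finite ?B" by (rule finite_subset[of _ "Pow K"]) (use K in auto)
  have inj: "inj_on (insert X) ?B"
  proof (rule inj_onI)
    fix F G assume "F \<in> ?B" "G \<in> ?B" "insert X F = insert X G"
    moreover have "X \<notin> F" "X \<notin> G" using \<open>F \<in> ?B\<close> \<open>G \<in> ?B\<close> X by auto
    ultimately show "F = G" by (metis Diff_insert_absorb)
  qed
  have disj: "?A \<inter> insert X ` ?B = {}" using X by auto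
  show ?thesis unfolding eq
    using card_Un_disjoint[OF finA finite_imageI[OF finB] disj] card_image[OF inj] by simp
qed



definition hfun :: "nat \<Rightarrow> nat \<Rightarrow> nat \<Rightarrow> nat" where
  "hfun R q e = (if e \<le> R \<and> even (R - e) then q choose ((R - e) div 2) else 0)"

lemma binomz_nat: "q \<ge> 0 \<Longrightarrow> k \<ge> 0 \<Longrightarrow> binomz q k = int (nat q choose nat k)"
  unfolding binomz_def by (auto simp: binomial_eq_0)

lemma binomz_neg: "k < 0 \<Longrightarrow> binomz q k = 0"
  unfolding binomz_def by simp

lemma binomz_pascal:
  assumes "q \<ge> 0" shows "binomz (q + 1) k = binomz q k + binomz q (k - 1)"
proof (cases "k < 0")
  case True then show ?thesis by (simp add: binomz_neg)
next
  case False
  show ?thesis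
  proof (cases "k = 0")
    case True then show ?thesis using assms by (simp add: binomz_nat binomz_neg)
  next
    case False2: False
    then have k1: "k - 1 \<ge> 0" using False by simp
    have nk: "nat k = Suc (nat (k - 1))" using k1 by simp
    have nq: "nat (q + 1) = Suc (nat q)" using assms by simp
    show ?thesis using assms k1 False
      by (simp add: binomz_nat nk nq del: of_nat_Suc)
  qed
qed

lemma binomz_symm:
  assumes "q \<ge> 0" shows "binomz q k = binomz q (q - k)"
proof (cases "k < 0 \<or> q < k")
  case True then show ?thesis unfolding binomz_def by auto
next
  case False
  then have "nat (q - k) = nat q - nat k" "nat k \<le> nat q" by auto
  then show ?thesis using False assms unfolding binomz_def by (simp add: binomial_symmetric[symmetric])
qed

lemma hfun_oddR_odd:
  assumes "R = 2*t - 1" "t \<ge> 1" "i \<ge> 1"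
  shows "int (hfun R q (2*i - 1)) = binomz (int q) (int t - int i)"
proof (cases "i \<le> t")
  case True
  have e1: "R - (2*i - 1) = 2*(t - i)" using assms True by arith
  have c0: "2*i - 1 \<le> R" using assms True by arith
  have c: "2*i - 1 \<le> R \<and> even (R - (2*i - 1))" using c0 e1 by simp
  have d: "(R - (2*i - 1)) div 2 = t - i" using e1 by simp
  have "hfun R q (2*i - 1) = q choose (t - i)" unfolding hfun_def by (simp only: if_P[OF c] d)
  moreover have "binomz (int q) (int t - int i) = binomz (int q) (int (t - i))" using True by (simp add: of_nat_diff)
  moreover have "binomz (int q) (int (t - i)) = int (q choose (t - i))" by (simp add: binomz_nat)
  ultimately show ?thesis by simp
next
  case False
  then have c: "\<not> (2*i - 1 \<le> R \<and> even (R - (2*i - 1)))" using assms by arith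
  have "hfun R q (2*i - 1) = 0" unfolding hfun_def by (simp only: if_not_P[OF c])
  moreover have "int t - int i < 0" using False by simp
  ultimately show ?thesis by (simp add: binomz_neg)
qed

lemma hfun_oddR_even:
  assumes "R = 2*t - 1" "t \<ge> 1"
  shows "hfun R q (2*i) = 0"
proof -
  have c: "\<not> (2*i \<le> R \<and> even (R - 2*i))"
  proof
    assume a: "2*i \<le> R \<and> even (R - 2*i)"
    then have "R - 2*i = Suc (2*(t - i - 1))" using assms by arith
    then show False using a by simp
  qed
  show ?thesis unfolding hfun_def by (simp only: if_not_P[OF c])
qed

lemma hfun_evenR_even:
  assumes "R = 2*t"
  shows "int (hfun R q (2*i)) = binomz (int q) (int t - int i)"
proof (cases "i \<le> t")
  case True
  have e1: "R - 2*i = 2*(t - i)" using assms True by arith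
  have c0: "2*i \<le> R" using assms True by arith
  have c: "2*i \<le> R \<and> even (R - 2*i)" using c0 e1 by simp
  have d: "(R - 2*i) div 2 = t - i" using e1 by simp
  have "hfun R q (2*i) = q choose (t - i)" unfolding hfun_def by (simp only: if_P[OF c] d)
  moreover have "binomz (int q) (int t - int i) = binomz (int q) (int (t - i))" using True by (simp add: of_nat_diff)
  moreover have "binomz (int q) (int (t - i)) = int (q choose (t - i))" by (simp add: binomz_nat)
  ultimately show ?thesis by simp
next
  case False
  then have c: "\<not> (2*i \<le> R \<and> even (R - 2*i))" using assms by arith
  have "hfun R q (2*i) = 0" unfolding hfun_def by (simp only: if_not_P[OF c])
  moreover have "int t - int i < 0" using False by simp
  ultimately show ?thesis by (simp add: binomz_neg)
qed

lemma hfun_evenR_odd: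
  assumes "R = 2*t" "i \<ge> 1"
  shows "hfun R q (2*i - 1) = 0"
proof -
  have c: "\<not> (2*i - 1 \<le> R \<and> even (R - (2*i - 1)))"
  proof
    assume a: "2*i - 1 \<le> R \<and> even (R - (2*i - 1))"
    then have "R - (2*i - 1) = Suc (2*(t - i))" using assms by arith
    then show False using a by simp
  qed
  show ?thesis unfolding hfun_def by (simp only: if_not_P[OF c])
qed

lemma sum_pairs: "(\<Sum>d=1..2*m. f d) = (\<Sum>i=1..m. f (2*i - 1) + f (2*i))"
  for f :: "nat \<Rightarrow> 'a::comm_monoid_add" and m :: nat
proof (induction m)
  case 0 then show ?case by simp
next
  case (Suc m)
  have e: "2 * Suc m = Suc (Suc (2*m))" by simp
  have "(\<Sum>d=1..2*Suc m. f d) = (\<Sum>d=1..2*m. f d) + f (2*m+1) + f (2*m+2)"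
    unfolding e by (simp add: add.assoc)
  then show ?case using Suc by (simp add: add.assoc)
qed


lemma sum_odd: "(\<Sum>d=1..2*m+1. f d) = (\<Sum>i=1..m. f (2*i - 1) + f (2*i)) + f (2*m+1)"
  for f :: "nat \<Rightarrow> 'a::comm_monoid_add" and m :: nat
  using sum_pairs[of f m] by (simp add: add.commute)

lemma case1_even:
  assumes t: "t \<ge> 1" and s: "s \<ge> 2"
  shows "int (\<Sum>d=1..2*s-3. hfun (2*t-1) q d) = (\<Sum>i=1..s-1. binomz (int q) (int t - int i))"
proof -
  define m where "m = s - 2"
  have e1: "2*s - 3 = 2*m+1" and e2: "s - 1 = Suc m" using s unfolding m_def by auto
  have "int (\<Sum>d=1..2*s-3. hfun (2*t-1) q d) = (\<Sum>d=1..2*m+1. int (hfun (2*t-1) q d))"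
    unfolding e1 by simp
  also have "\<dots> = (\<Sum>i=1..m. int (hfun (2*t-1) q (2*i-1)) + int (hfun (2*t-1) q (2*i))) + int (hfun (2*t-1) q (2*m+1))"
    by (rule sum_odd)
  also have "\<dots> = (\<Sum>i=1..m. binomz (int q) (int t - int i)) + binomz (int q) (int t - int (Suc m))"
  proof -
    have "(\<Sum>i=1..m. int (hfun (2*t-1) q (2*i-1)) + int (hfun (2*t-1) q (2*i))) = (\<Sum>i=1..m. binomz (int q) (int t - int i))"
    proof (rule sum.cong)
      fix i assume "i \<in> {1..m}"
      then have i: "i \<ge> 1" by simp
      show "int (hfun (2*t-1) q (2*i-1)) + int (hfun (2*t-1) q (2*i)) = binomz (int q) (int t - int i)"
        using hfun_oddR_odd[OF refl t i, of q] hfun_oddR_even[OF refl t, of q i] by simp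
    qed simp
    moreover have "int (hfun (2*t-1) q (2*m+1)) = binomz (int q) (int t - int (Suc m))"
      using hfun_oddR_odd[OF refl t, of "Suc m" q] by simp
    ultimately show ?thesis by simp
  qed
  also have "\<dots> = (\<Sum>i=1..s-1. binomz (int q) (int t - int i))" unfolding e2 by simp
  finally show ?thesis .
qed

lemma case1_odd:
  assumes s: "s \<ge> 2"
  shows "int (\<Sum>d=1..2*s-3. hfun (2*t) q d) = (\<Sum>i=1..s-2. binomz (int q) (int t - int i))"
proof -
  define m where "m = s - 2"
  have e1: "2*s - 3 = 2*m+1" using s unfolding m_def by auto
  have "int (\<Sum>d=1..2*s-3. hfun (2*t) q d) = (\<Sum>d=1..2*m+1. int (hfun (2*t) q d))"
    unfolding e1 by simp
  also have "\<dots> = (\<Sum>i=1..m. int (hfun (2*t) q (2*i-1)) + int (hfun (2*t) q (2*i))) + int (hfun (2*t) q (2*m+1))"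
    by (rule sum_odd)
  also have "\<dots> = (\<Sum>i=1..m. binomz (int q) (int t - int i))"
  proof -
    have "(\<Sum>i=1..m. int (hfun (2*t) q (2*i-1)) + int (hfun (2*t) q (2*i))) = (\<Sum>i=1..m. binomz (int q) (int t - int i))"
    proof (rule sum.cong)
      fix i assume "i \<in> {1..m}"
      then have i: "i \<ge> 1" by simp
      show "int (hfun (2*t) q (2*i-1)) + int (hfun (2*t) q (2*i)) = binomz (int q) (int t - int i)"
        using hfun_evenR_odd[OF refl i, of t q] hfun_evenR_even[OF refl, of t q i] by simp
    qed simp
    moreover have "hfun (2*t) q (2*m+1) = 0"
      using hfun_evenR_odd[OF refl, of "Suc m" t q] by simp
    ultimately show ?thesis by simp
  qed
  finally show ?thesis unfolding m_def .
qed


lemma sum_shift1: "(\<Sum>i=1..Suc k. f i) = f 1 + (\<Sum>i=1..k. f (Suc i))"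
  for f :: "nat \<Rightarrow> 'a::comm_monoid_add"
proof (induction k)
  case 0 then show ?case by simp
next
  case (Suc k)
  have "(\<Sum>i=1..Suc (Suc k). f i) = (\<Sum>i=1..Suc k. f i) + f (Suc (Suc k))" by simp
  also have "\<dots> = f 1 + (\<Sum>i=1..k. f (Suc i)) + f (Suc (Suc k))" using Suc by simp
  also have "\<dots> = f 1 + (\<Sum>i=1..Suc k. f (Suc i))" by (simp add: add.assoc)
  finally show ?case .
qed

lemma case2_even_L:
  assumes t: "t \<ge> 1" and s: "s \<ge> 2"
  shows "int (\<Sum>d=1..2*s-2. hfun (2*t-1) q d + hfun (2*t-1) q (d+3))
       = (\<Sum>i=1..s-1. binomz (int q) (int t - int i) + binomz (int q) (int t - int i - 2))"
proof -
  define m where "m = s - 1"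
  define h where "h = hfun (2*t-1) q"
  have e1: "2*s - 2 = 2*m" using s unfolding m_def by auto
  have "int (\<Sum>d=1..2*s-2. h d + h (d+3)) = (\<Sum>d=1..2*m. int (h d) + int (h (d+3)))"
    unfolding e1 by simp
  also have "\<dots> = (\<Sum>i=1..m. (int (h (2*i-1)) + int (h (2*i-1+3))) + (int (h (2*i)) + int (h (2*i+3))))"
    by (rule sum_pairs)
  also have "\<dots> = (\<Sum>i=1..m. binomz (int q) (int t - int i) + binomz (int q) (int t - int i - 2))"
  proof (rule sum.cong)
    fix i assume "i \<in> {1..m}"
    then have i: "i \<ge> 1" by simp
    have a1: "2*i - 1 + 3 = 2*(i+1)" using i by simp
    have a2: "2*i + 3 = 2*(i+2) - 1" by simp
    have "int (h (2*i-1)) = binomz (int q) (int t - int i)"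
      unfolding h_def by (rule hfun_oddR_odd[OF refl t i])
    moreover have "h (2*i-1+3) = 0" unfolding a1 h_def by (rule hfun_oddR_even[OF refl t])
    moreover have "h (2*i) = 0" unfolding h_def by (rule hfun_oddR_even[OF refl t])
    moreover have "int (h (2*i+3)) = binomz (int q) (int t - int i - 2)"
    proof -
      have "int (h (2*i+3)) = binomz (int q) (int t - int (i+2))"
        unfolding a2 h_def by (rule hfun_oddR_odd[OF refl t]) simp
      also have "\<dots> = binomz (int q) (int t - int i - 2)" by (rule arg_cong[where f="binomz (int q)"]) simp
      finally show ?thesis .
    qed
    ultimately show "(int (h (2*i-1)) + int (h (2*i-1+3))) + (int (h (2*i)) + int (h (2*i+3)))
        = binomz (int q) (int t - int i) + binomz (int q) (int t - int i - 2)" by simp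
  qed simp
  finally show ?thesis unfolding h_def m_def .
qed

lemma case2_even_T:
  assumes t: "t \<ge> 1"
  shows "int (\<Sum>d=1..1. hfun (2*t-1) q d + hfun (2*t-1) q (d + 2*s))
       = binomz (int q) (int t - 1) + binomz (int q) (int t - int s - 1)"
proof -
  have "int (hfun (2*t-1) q (2*1-1)) = binomz (int q) (int t - int 1)"
    by (rule hfun_oddR_odd[OF refl t]) simp
  moreover have "int (hfun (2*t-1) q (1 + 2*s)) = binomz (int q) (int t - int s - 1)"
  proof -
    have e: "1 + 2*s = 2*(s+1) - 1" by simp
    have "int (hfun (2*t-1) q (1 + 2*s)) = binomz (int q) (int t - int (s+1))"
      unfolding e by (rule hfun_oddR_odd[OF refl t]) simp
    also have "\<dots> = binomz (int q) (int t - int s - 1)" by (rule arg_cong[where f="binomz (int q)"]) simp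
    finally show ?thesis .
  qed
  ultimately show ?thesis by simp
qed

lemma case2_even_ident:
  fixes q s t :: nat
  assumes s: "s \<ge> 2" and qq: "q + s + 2 = 2*t"
  shows "int (2*s) * (\<Sum>i=1..s-1. binomz (int q) (int t - int i) + binomz (int q) (int t - int i - 2))
       + 3 * (binomz (int q) (int t - 1) + binomz (int q) (int t - int s - 1))
     = 2 * (int (2*s) + 3) * binomz (int q) (int t - 1)
       + int (2*s) * (\<Sum>i=1..s-2. binomz (int q + 1) (int t - int i - 1))"
proof -
  define k where "k = s - 2"
  define B where "B = binomz (int q)"
  have sk: "s - 1 = Suc k" "s - 2 = k" using s unfolding k_def by auto
  have sym: "B (int t - int s - 1) = B (int t - 1)"
  proof -
    have "B (int t - 1) = B (int q - (int t - 1))" unfolding B_def by (rule binomz_symm) simp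
    moreover have "int q - (int t - 1) = int t - int s - 1" using qq by linarith
    ultimately show ?thesis by simp
  qed
  have X: "(\<Sum>i=1..Suc k. B (int t - int i)) = B (int t - 1) + (\<Sum>i=1..k. B (int t - int i - 1))"
    using sum_shift1[of "\<lambda>i. B (int t - int i)" k] by (simp add: algebra_simps)
  have Y: "(\<Sum>i=1..Suc k. B (int t - int i - 2)) = (\<Sum>i=1..k. B (int t - int i - 2)) + B (int t - int s - 1)"
  proof -
    have "int t - int (Suc k) - 2 = int t - int s - 1" using s unfolding k_def by simp
    then show ?thesis by simp
  qed
  have P: "(\<Sum>i=1..k. binomz (int q + 1) (int t - int i - 1))
        = (\<Sum>i=1..k. B (int t - int i - 1)) + (\<Sum>i=1..k. B (int t - int i - 2))"
  proof -
    have "(\<Sum>i=1..k. binomz (int q + 1) (int t - int i - 1)) = (\<Sum>i=1..k. B (int t - int i - 1) + B (int t - int i - 2))"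
    proof (rule sum.cong)
      fix i
      have "binomz (int q + 1) (int t - int i - 1) = binomz (int q) (int t - int i - 1) + binomz (int q) (int t - int i - 1 - 1)"
        by (rule binomz_pascal) simp
      moreover have "binomz (int q) (int t - int i - 1 - 1) = binomz (int q) (int t - int i - 2)"
        by (rule arg_cong[where f="binomz (int q)"]) simp
      ultimately show "binomz (int q + 1) (int t - int i - 1) = B (int t - int i - 1) + B (int t - int i - 2)"
        unfolding B_def by simp
    qed simp
    then show ?thesis by (simp add: sum.distrib)
  qed
  define X' where "X' = (\<Sum>i=1..k. B (int t - int i - 1))"
  define Y' where "Y' = (\<Sum>i=1..k. B (int t - int i - 2))"
  have L: "(\<Sum>i=1..s-1. B (int t - int i) + B (int t - int i - 2)) = 2 * B (int t - 1) + X' + Y'"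
    unfolding sk(1) sum.distrib X Y sym X'_def Y'_def by simp
  have "int (2*s) * (\<Sum>i=1..s-1. B (int t - int i) + B (int t - int i - 2))
       + 3 * (B (int t - 1) + B (int t - int s - 1))
     = int (2*s) * (2 * B (int t - 1) + X' + Y') + 3 * (B (int t - 1) + B (int t - 1))"
    unfolding L sym by simp
  also have "\<dots> = 2 * (int (2*s) + 3) * B (int t - 1) + int (2*s) * (X' + Y')"
    by (simp add: algebra_simps)
  also have "\<dots> = 2 * (int (2*s) + 3) * B (int t - 1) + int (2*s) * (\<Sum>i=1..s-2. binomz (int q + 1) (int t - int i - 1))"
    unfolding sk(2) P X'_def Y'_def by simp
  finally show ?thesis unfolding B_def .
qed

lemma case2_odd_L:
  assumes s: "s \<ge> 2"
  shows "int (\<Sum>d=1..2*s-2. hfun (2*t) q d + hfun (2*t) q (d+3))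
       = (\<Sum>i=1..s-1. binomz (int q + 1) (int t - int i))"
proof -
  define m where "m = s - 1"
  define h where "h = hfun (2*t) q"
  have e1: "2*s - 2 = 2*m" using s unfolding m_def by auto
  have "int (\<Sum>d=1..2*s-2. h d + h (d+3)) = (\<Sum>d=1..2*m. int (h d) + int (h (d+3)))"
    unfolding e1 by simp
  also have "\<dots> = (\<Sum>i=1..m. (int (h (2*i-1)) + int (h (2*i-1+3))) + (int (h (2*i)) + int (h (2*i+3))))"
    by (rule sum_pairs)
  also have "\<dots> = (\<Sum>i=1..m. binomz (int q + 1) (int t - int i))"
  proof (rule sum.cong)
    fix i assume "i \<in> {1..m}"
    then have i: "i \<ge> 1" by simp
    have a1: "2*i - 1 + 3 = 2*(i+1)" using i by simp
    have a2: "2*i + 3 = 2*(i+2) - 1" by simp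
    have "h (2*i-1) = 0" unfolding h_def by (rule hfun_evenR_odd[OF refl i])
    moreover have "int (h (2*i-1+3)) = binomz (int q) (int t - int i - 1)"
    proof -
      have "int (h (2*i-1+3)) = binomz (int q) (int t - int (i+1))"
        unfolding a1 h_def by (rule hfun_evenR_even[OF refl])
      also have "\<dots> = binomz (int q) (int t - int i - 1)" by (rule arg_cong[where f="binomz (int q)"]) simp
      finally show ?thesis .
    qed
    moreover have "int (h (2*i)) = binomz (int q) (int t - int i)" unfolding h_def by (rule hfun_evenR_even[OF refl])
    moreover have "h (2*i+3) = 0"
      unfolding a2 h_def by (rule hfun_evenR_odd[OF refl]) simp
    moreover have "binomz (int q + 1) (int t - int i) = binomz (int q) (int t - int i) + binomz (int q) (int t - int i - 1)"
      by (rule binomz_pascal) simp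
    ultimately show "(int (h (2*i-1)) + int (h (2*i-1+3))) + (int (h (2*i)) + int (h (2*i+3)))
        = binomz (int q + 1) (int t - int i)" by simp
  qed simp
  finally show ?thesis unfolding h_def m_def .
qed

lemma case2_odd_T:
  shows "(\<Sum>d=1..1. hfun (2*t) q d + hfun (2*t) q (d + 2*s)) = 0"
proof -
  have "hfun (2*t) q (2*1-1) = 0" by (rule hfun_evenR_odd[OF refl]) simp
  moreover have "hfun (2*t) q (2*(s+1)-1) = 0" by (rule hfun_evenR_odd[OF refl]) simp
  moreover have "2*(s+1) - 1 = 1 + 2*s" by simp
  ultimately show ?thesis by simp
qed


context pctx begin

lemma wH_eq: "wH n p = (\<Sum>C\<in>cyc. card C)"
proof -
  have "wH n p = card S" unfolding wH_def S_def by simp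
  also have "\<dots> = card (\<Union>cyc)" using S_Union by simp
  also have "\<dots> = (\<Sum>C\<in>cyc. card C)" by (rule card_Union_cyc) simp
  finally show ?thesis .
qed

lemma N3_PAR:
  assumes w: "wH n p = 2*r - 1" and r: "r \<ge> 1"
  shows "card (N3 n p) = card (PAR (r - 1))"
proof -
  have "(wH n p + 1) div 2 = r" using w r by simp
  then have "N3 n p = {\<sigma> \<in> Sym n. card (Tc \<sigma> \<inter> Tc p) = r - 1 \<and> card (Tc \<sigma>) = r}"
    unfolding N3_def Let_def by simp
  then have "card (N3 n p) = card (ADM p {i\<in>{1..n}. p i \<noteq> i} (r - 1))"
    using N3_card[OF pp r] by simp
  also have "\<dots> = card (PAR (r - 1))" using card_ADM unfolding S_def .
  finally show ?thesis .
qed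

lemma ncyc_cyc: "ncyc n p k = card {c \<in> cyc. card c = k}"
  unfolding ncyc_def cyc_def ..

lemma G_two: "card C = 2 \<Longrightarrow> (\<Sum>d\<in>{1..card C - 2}. f d) = (0::nat)"
  by simp

lemma main1:
  assumes s: "s \<ge> 2" and nL: "ncyc n p (2*s-1) = 1" and n2: "ncyc n p 2 = q"
    and all: "\<forall>c\<in>cyc. card c = 2*s-1 \<or> card c = 2" and r: "r = s + q"
  shows "card (N3 n p) = (2*s-1) * (\<Sum>d=1..2*s-3. hfun (r-1) q d)"
proof -
  obtain L where Lset: "{c \<in> cyc. card c = 2*s-1} = {L}"
    using nL unfolding ncyc_cyc by (rule card_1_singletonE)
  have Lc: "L \<in> cyc" and cL: "card L = 2*s-1" using Lset by auto
  define Two where "Two = {c \<in> cyc. card c = 2}"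
  have cTwo: "card Two = q" using n2 unfolding ncyc_cyc Two_def .
  have fTwo: "finite Two" unfolding Two_def using finite_cyc by simp
  have LT: "L \<notin> Two" unfolding Two_def using cL s by auto
  have cyc_eq: "cyc = insert L Two"
  proof
    show "cyc \<subseteq> insert L Two"
    proof
      fix c assume c: "c \<in> cyc"
      show "c \<in> insert L Two"
      proof (cases "card c = 2")
        case True then show ?thesis using c unfolding Two_def by simp
      next
        case False
        then have "c \<in> {c \<in> cyc. card c = 2*s-1}" using c all by auto
        then have "c \<in> {L}" by (simp only: Lset)
        then show ?thesis by simp
      qed
    qed
    show "insert L Two \<subseteq> cyc" using Lc unfolding Two_def by auto
  qed
  have sumTwo: "(\<Sum>C\<in>Two. card C) = 2 * q"
  proof -
    have "(\<Sum>C\<in>Two. card C) = (\<Sum>C\<in>Two. 2)" unfolding Two_def by (rule sum.cong) auto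
    then show ?thesis using cTwo by simp
  qed
  have "wH n p = (\<Sum>C\<in>cyc. card C)" by (rule wH_eq)
  also have "\<dots> = card L + (\<Sum>C\<in>Two. card C)" unfolding cyc_eq using fTwo LT by simp
  also have "\<dots> = 2*r - 1" using cL sumTwo r s by simp
  finally have w: "wH n p = 2*r - 1" .
  have r1: "r \<ge> 1" using r s by simp
  define G where "G C = (\<Sum>d\<in>{1..card C - 2}. card {F. F \<subseteq> cyc - {C} \<and> d + (\<Sum>C'\<in>F. card C') = r - 1})" for C
  have "card (N3 n p) = card (PAR (r - 1))" by (rule N3_PAR[OF w r1])
  also have "\<dots> = (\<Sum>C\<in>cyc. card C * G C)" unfolding card_PAR G_def ..
  also have "\<dots> = card L * G L + (\<Sum>C\<in>Two. card C * G C)" unfolding cyc_eq using fTwo LT by simp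
  also have "(\<Sum>C\<in>Two. card C * G C) = 0"
  proof -
    have "G C = 0" if "C \<in> Two" for C using that unfolding Two_def G_def by simp
    then show ?thesis by simp
  qed
  also have "G L = (\<Sum>d=1..2*s-3. hfun (r-1) q d)"
  proof -
    have cm: "cyc - {L} = Two" unfolding cyc_eq using LT by auto
    have two: "\<forall>C\<in>Two. card C = 2" unfolding Two_def by simp
    have "card {F. F \<subseteq> Two \<and> d + (\<Sum>C'\<in>F. card C') = r - 1} = hfun (r-1) q d" for d
      using cnt_two[OF fTwo two, of d "r-1"] unfolding hfun_def by (simp only: cTwo)
    moreover have "card L - 2 = 2*s - 3" using cL by simp
    ultimately show ?thesis unfolding G_def cm by simp
  qed
  finally show ?thesis using cL by simp
qed


lemma main2:
  assumes s: "s \<ge> 2" and nL: "ncyc n p (2*s) = 1" and nT: "ncyc n p 3 = 1" and n2: "ncyc n p 2 = q"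
    and all: "\<forall>c\<in>cyc. card c = 2*s \<or> card c = 3 \<or> card c = 2" and r: "r = s + 2 + q"
  shows "card (N3 n p) = 2*s * (\<Sum>d=1..2*s-2. hfun (r-1) q d + hfun (r-1) q (d+3))
                        + 3 * (\<Sum>d=1..1. hfun (r-1) q d + hfun (r-1) q (d + 2*s))"
proof -
  obtain L where Lset: "{c \<in> cyc. card c = 2*s} = {L}"
    using nL unfolding ncyc_cyc by (rule card_1_singletonE)
  obtain T where Tset: "{c \<in> cyc. card c = 3} = {T}"
    using nT unfolding ncyc_cyc by (rule card_1_singletonE)
  have Lc: "L \<in> cyc" and cL: "card L = 2*s" using Lset by auto
  have Tc: "T \<in> cyc" and cT: "card T = 3" using Tset by auto
  define Two where "Two = {c \<in> cyc. card c = 2}"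
  have cTwo: "card Two = q" using n2 unfolding ncyc_cyc Two_def .
  have fTwo: "finite Two" unfolding Two_def using finite_cyc by simp
  have two: "\<forall>C\<in>Two. card C = 2" unfolding Two_def by simp
  have LT: "L \<notin> Two" unfolding Two_def using cL s by auto
  have TT: "T \<notin> Two" unfolding Two_def using cT by auto
  have LTn: "L \<noteq> T" using cL cT s by auto
  have cyc_eq: "cyc = insert L (insert T Two)"
  proof
    show "cyc \<subseteq> insert L (insert T Two)"
    proof
      fix c assume c: "c \<in> cyc"
      show "c \<in> insert L (insert T Two)"
      proof (cases "card c = 2")
        case True then show ?thesis using c unfolding Two_def by simp
      next
        case False
        show ?thesis
        proof (cases "card c = 3")
          case True
          then have "c \<in> {c \<in> cyc. card c = 3}" using c by simp
          then have "c \<in> {T}" by (simp only: Tset)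
          then show ?thesis by simp
        next
          case False2: False
          then have "c \<in> {c \<in> cyc. card c = 2*s}" using c all False by auto
          then have "c \<in> {L}" by (simp only: Lset)
          then show ?thesis by simp
        qed
      qed
    qed
    show "insert L (insert T Two) \<subseteq> cyc" using Lc Tc unfolding Two_def by auto
  qed
  have sumTwo: "(\<Sum>C\<in>Two. card C) = 2 * q"
  proof -
    have "(\<Sum>C\<in>Two. card C) = (\<Sum>C\<in>Two. 2)" using two by (intro sum.cong) auto
    then show ?thesis using cTwo by simp
  qed
  have nin: "L \<notin> insert T Two" using LT LTn by simp
  have "wH n p = (\<Sum>C\<in>cyc. card C)" by (rule wH_eq)
  also have "\<dots> = card L + (card T + (\<Sum>C\<in>Two. card C))" unfolding cyc_eq using fTwo nin TT by simp
  also have "\<dots> = 2*r - 1" using cL cT sumTwo r s by simp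
  finally have w: "wH n p = 2*r - 1" .
  have r1: "r \<ge> 1" using r s by simp
  define G where "G C = (\<Sum>d\<in>{1..card C - 2}. card {F. F \<subseteq> cyc - {C} \<and> d + (\<Sum>C'\<in>F. card C') = r - 1})" for C
  have cnt: "card {F. F \<subseteq> Two \<and> e + (\<Sum>C'\<in>F. card C') = r - 1} = hfun (r-1) q e" for e
    using cnt_two[OF fTwo two, of e "r-1"] unfolding hfun_def by (simp only: cTwo)
  have "card (N3 n p) = card (PAR (r - 1))" by (rule N3_PAR[OF w r1])
  also have "\<dots> = (\<Sum>C\<in>cyc. card C * G C)" unfolding card_PAR G_def ..
  also have "\<dots> = card L * G L + (card T * G T + (\<Sum>C\<in>Two. card C * G C))"
    unfolding cyc_eq using fTwo nin TT by simp
  also have "(\<Sum>C\<in>Two. card C * G C) = 0"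
  proof -
    have "G C = 0" if "C \<in> Two" for C using that unfolding Two_def G_def by simp
    then show ?thesis by simp
  qed
  also have "G L = (\<Sum>d=1..2*s-2. hfun (r-1) q d + hfun (r-1) q (d+3))"
  proof -
    have cm: "cyc - {L} = insert T Two" unfolding cyc_eq using nin by auto
    have "card {F. F \<subseteq> insert T Two \<and> d + (\<Sum>C'\<in>F. card C') = r - 1} = hfun (r-1) q d + hfun (r-1) q (d+3)" for d
      using cnt_insert[OF fTwo TT, of d "r-1"] cnt[of d] cnt[of "d+3"] cT by simp
    moreover have "card L - 2 = 2*s - 2" using cL by simp
    ultimately show ?thesis unfolding G_def cm by simp
  qed
  also have "G T = (\<Sum>d=1..1. hfun (r-1) q d + hfun (r-1) q (d + 2*s))"
  proof -
    have cm: "cyc - {T} = insert L Two" unfolding cyc_eq using nin TT LTn by auto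
    have "card {F. F \<subseteq> insert L Two \<and> d + (\<Sum>C'\<in>F. card C') = r - 1} = hfun (r-1) q d + hfun (r-1) q (d + 2*s)" for d
      using cnt_insert[OF fTwo LT, of d "r-1"] cnt[of d] cnt[of "d+2*s"] cL by simp
    then have X: "card {F. F \<subseteq> insert L Two \<and> 1 + (\<Sum>C'\<in>F. card C') = r - 1} = hfun (r-1) q 1 + hfun (r-1) q (1 + 2*s)" .
    have "card T - 2 = 1" using cT by simp
    then show ?thesis unfolding G_def cm using X by simp
  qed
  finally show ?thesis using cL cT by simp
qed

end

theorem lemma13:
  fixes t r n :: nat
  assumes "t \<ge> 2" and "r = 2*t \<or> r = 2*t+1" and "n \<ge> 2*r - 1"
  shows
   "(\<forall>s p. 2 \<le> s \<and> s \<le> r \<and> p \<in> Sym n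
        \<and> ncyc n p (2*s-1) = 1 \<and> ncyc n p 2 = r - s
        \<and> (\<forall>c \<in> nontriv_cycles n p. card c = 2*s-1 \<or> card c = 2)
      \<longrightarrow> int (card (N3 n p)) =
          (if r = 2*t
           then int (2*s-1) * (\<Sum>i=1..s-1. binomz (int r - int s) (int t - int i))
           else int (2*s-1) * (\<Sum>i=1..s-2. binomz (int r - int s) (int t - int i))))
    \<and>
    (\<forall>s p. 2 \<le> s \<and> s \<le> r - 2 \<and> p \<in> Sym n
        \<and> ncyc n p (2*s) = 1 \<and> ncyc n p 3 = 1 \<and> ncyc n p 2 = r - s - 2
        \<and> (\<forall>c \<in> nontriv_cycles n p. card c = 2*s \<or> card c = 3 \<or> card c = 2)
      \<longrightarrow> int (card (N3 n p)) =
          (if r = 2*t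
           then 2 * (int (2*s) + 3) * binomz (int r - int s - 2) (int t - 1)
                + int (2*s) * (\<Sum>i=1..s-2. binomz (int r - int s - 1) (int t - int i - 1))
           else int (2*s) * (\<Sum>i=1..s-1. binomz (int r - int s - 1) (int t - int i))))"
proof (intro conjI allI impI)
  have t1: "t \<ge> 1" using assms(1) by simp
  fix s p
  {
    assume H: "2 \<le> s \<and> s \<le> r \<and> p \<in> Sym n
        \<and> ncyc n p (2*s-1) = 1 \<and> ncyc n p 2 = r - s
        \<and> (\<forall>c \<in> nontriv_cycles n p. card c = 2*s-1 \<or> card c = 2)"
    then have s: "s \<ge> 2" "s \<le> r" and pS: "p permutes {1..n}" unfolding Sym_def by auto
    interpret pctx p n using pS by unfold_locales
    have all: "\<forall>c\<in>cyc. card c = 2*s-1 \<or> card c = 2" using H unfolding cyc_def by blast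
    have c: "card (N3 n p) = (2*s-1) * (\<Sum>d=1..2*s-3. hfun (r-1) (r-s) d)"
      by (rule main1[OF s(1) _ _ all]) (use H s in auto)
    have iq: "int (r - s) = int r - int s" using s by simp
    show "int (card (N3 n p)) =
          (if r = 2*t
           then int (2*s-1) * (\<Sum>i=1..s-1. binomz (int r - int s) (int t - int i))
           else int (2*s-1) * (\<Sum>i=1..s-2. binomz (int r - int s) (int t - int i)))"
    proof (cases "r = 2*t")
      case True
      have "r - 1 = 2*t - 1" using True by simp
      then have "int (\<Sum>d=1..2*s-3. hfun (r-1) (r-s) d) = (\<Sum>i=1..s-1. binomz (int (r-s)) (int t - int i))"
        using case1_even[OF t1 s(1), of "r-s"] by simp
      then show ?thesis using True c iq by simp
    next
      case False
      then have rr: "r = 2*t+1" using assms(2) by simp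
      have "r - 1 = 2*t" using rr by simp
      then have "int (\<Sum>d=1..2*s-3. hfun (r-1) (r-s) d) = (\<Sum>i=1..s-2. binomz (int (r-s)) (int t - int i))"
        using case1_odd[OF s(1), of t "r-s"] by simp
      then show ?thesis using False c iq by simp
    qed
  }
  {
    assume H: "2 \<le> s \<and> s \<le> r - 2 \<and> p \<in> Sym n
        \<and> ncyc n p (2*s) = 1 \<and> ncyc n p 3 = 1 \<and> ncyc n p 2 = r - s - 2
        \<and> (\<forall>c \<in> nontriv_cycles n p. card c = 2*s \<or> card c = 3 \<or> card c = 2)"
    then have s: "s \<ge> 2" "s + 2 \<le> r" and pS: "p permutes {1..n}" unfolding Sym_def by auto
    interpret pctx p n using pS by unfold_locales
    have all: "\<forall>c\<in>cyc. card c = 2*s \<or> card c = 3 \<or> card c = 2" using H unfolding cyc_def by blast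
    define q where "q = r - s - 2"
    have rq: "r = s + 2 + q" using s unfolding q_def by simp
    have c: "card (N3 n p) = 2*s * (\<Sum>d=1..2*s-2. hfun (r-1) q d + hfun (r-1) q (d+3))
                        + 3 * (\<Sum>d=1..1. hfun (r-1) q d + hfun (r-1) q (d + 2*s))"
      by (rule main2[OF s(1) _ _ _ all rq]) (use H q_def in auto)
    have iq: "int q = int r - int s - 2" using s unfolding q_def by simp
    show "int (card (N3 n p)) =
          (if r = 2*t
           then 2 * (int (2*s) + 3) * binomz (int r - int s - 2) (int t - 1)
                + int (2*s) * (\<Sum>i=1..s-2. binomz (int r - int s - 1) (int t - int i - 1))
           else int (2*s) * (\<Sum>i=1..s-1. binomz (int r - int s - 1) (int t - int i)))"
    proof (cases "r = 2*t")
      case True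
      have R: "r - 1 = 2*t - 1" using True by simp
      have L: "int (\<Sum>d=1..2*s-2. hfun (r-1) q d + hfun (r-1) q (d+3))
          = (\<Sum>i=1..s-1. binomz (int q) (int t - int i) + binomz (int q) (int t - int i - 2))"
        unfolding R by (rule case2_even_L[OF t1 s(1)])
      have T: "int (\<Sum>d=1..1. hfun (r-1) q d + hfun (r-1) q (d + 2*s))
          = binomz (int q) (int t - 1) + binomz (int q) (int t - int s - 1)"
        unfolding R by (rule case2_even_T[OF t1])
      have qq: "q + s + 2 = 2*t" using rq True by simp
      have "int (card (N3 n p)) = int (2*s) * int (\<Sum>d=1..2*s-2. hfun (r-1) q d + hfun (r-1) q (d+3))
          + 3 * int (\<Sum>d=1..1. hfun (r-1) q d + hfun (r-1) q (d + 2*s))"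
        unfolding c by simp
      also have "\<dots> = 2 * (int (2*s) + 3) * binomz (int q) (int t - 1)
       + int (2*s) * (\<Sum>i=1..s-2. binomz (int q + 1) (int t - int i - 1))"
        unfolding L T by (rule case2_even_ident[OF s(1) qq])
      also have "\<dots> = 2 * (int (2*s) + 3) * binomz (int r - int s - 2) (int t - 1)
                + int (2*s) * (\<Sum>i=1..s-2. binomz (int r - int s - 1) (int t - int i - 1))"
        unfolding iq by (simp add: algebra_simps)
      finally show ?thesis using True by simp
    next
      case False
      then have rr: "r = 2*t+1" using assms(2) by simp
      have R: "r - 1 = 2*t" using rr by simp
      have L: "int (\<Sum>d=1..2*s-2. hfun (r-1) q d + hfun (r-1) q (d+3))
          = (\<Sum>i=1..s-1. binomz (int q + 1) (int t - int i))"
        unfolding R by (rule case2_odd_L[OF s(1)])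
      have T: "(\<Sum>d=1..1. hfun (r-1) q d + hfun (r-1) q (d + 2*s)) = 0"
        unfolding R by (rule case2_odd_T)
      have "int (card (N3 n p)) = int (2*s) * int (\<Sum>d=1..2*s-2. hfun (r-1) q d + hfun (r-1) q (d+3))"
        unfolding c T by simp
      also have "\<dots> = int (2*s) * (\<Sum>i=1..s-1. binomz (int r - int s - 1) (int t - int i))"
        unfolding L iq by (simp add: algebra_simps)
      finally show ?thesis using False by simp
    qed
  }
qed


end
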